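(* Let $n\ge2$, let $c=(c_{i,j})$ be an $n\times(n+1)$ matrix with entries in $\{0,1\}$, $\sigma_1,\ldots,\sigma_n>0$, $\gamma_1,\ldots,\gamma_{n+1}>0$. Let $\mathbf{X}=(X_1,\ldots,X_n)'$ have decumulative distribution function $\mathbf{P}[X_1>x_1,\ldots,X_n>x_n]=\prod_{j=1}^{n+1}(1+\sum_{i=1}^nc_{i,j}x_i/\sigma_i)^{-\gamma_j}$ for $(x_1,\ldots,x_n)'\in(0,\infty)^n$. For $1\le k\ne l\le n$ let $\gamma^\ast_{c,k}=\sum_jc_{k,j}\gamma_j$ and $\gamma_{c,(k,l)}=\sum_jc_{k,j}c_{l,j}\gamma_j$. If $\gamma^\ast_{c,k}>1$ and $q\in[0,1)$, then \[ \mathbf{E}\left[X_k\mid X_l>VaR_q[X_l]\right]=\frac{\sigma_k}{\gamma^\ast_{c,k}-1}\,{}_2F_1\left(\gamma_{c,(k,l)},1;\gamma^\ast_{c,k};\frac{VaR_q[X_l]}{\sigma_l+VaR_q[X_l]}\right). \]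
   Context: $VaR_q[Y]=\inf\{x:\mathbf{P}[Y\le x]\ge q\}$. ${}_2F_1(a,b;c;z)=\sum_{k=0}^\infty\frac{(a)_k(b)_k}{(c)_k}\frac{z^k}{k!}$ with $(a)_k=\Gamma(a+k)/\Gamma(a)$. *)

theory Defs
  imports "HOL-Probability.Probability"
begin

definition hyp2F1 :: "real \<Rightarrow> real \<Rightarrow> real \<Rightarrow> real \<Rightarrow> real" where
  "hyp2F1 a b c z = (\<Sum>k. pochhammer a k * pochhammer b k / pochhammer c k * z ^ k / fact k)"

text \<open>For q = 0 the literal infimum is
  -infinity (not a real); following the paper's usage we take the left endpoint of the
  support, inf{x. P[Y <= x] > 0}, which coincides with the lower limit of VaR_q as q -> 0+.\<close>
definition VaR :: "'a measure \<Rightarrow> real \<Rightarrow> ('a \<Rightarrow> real) \<Rightarrow> real" where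
  "VaR M q Y = (if q = 0 then Inf {x. measure M {\<omega>\<in>space M. Y \<omega> \<le> x} > 0}
                else Inf {x. measure M {\<omega>\<in>space M. Y \<omega> \<le> x} \<ge> q})"

definition cond_exp_event :: "'a measure \<Rightarrow> ('a \<Rightarrow> real) \<Rightarrow> 'a set \<Rightarrow> real" where
  "cond_exp_event M Z A = (\<integral>\<omega>. indicator A \<omega> * Z \<omega> \<partial>M) / measure M A"

end

theory Submission
  imports Defs
begin


fun Fa :: "real \<Rightarrow> nat \<Rightarrow> real \<Rightarrow> real" where
  "Fa s 0 u = - ((1+u) powr (1-s)) / (s-1)"
| "Fa s (Suc n) u = (real (Suc n) * Fa s n u - u^(Suc n) * (1+u) powr (-(s+n))) / (s+n)"

lemma powr_deriv_aux:
  assumes "u > -1"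
  shows "((\<lambda>u. (1+u) powr r) has_real_derivative r * (1+u) powr (r-1)) (at u)"
proof -
  have d1: "((\<lambda>x. x powr r) has_real_derivative r * (1+u) powr (r-1)) (at (1+u))"
    using assms by (intro has_real_derivative_powr) auto
  have "((\<lambda>u. (1+u) powr r) has_real_derivative r * (1+u) powr (r-1) * 1) (at u)"
    by (rule DERIV_chain2[where f="\<lambda>x. x powr r" and g="\<lambda>u. 1+u", OF d1]) (auto intro!: derivative_eq_intros)
  then show ?thesis by simp
qed

lemma Fa_deriv:
  assumes "s > 1" "u > -1"
  shows "(Fa s n has_real_derivative u^n * (1+u) powr (-(s+n))) (at u)"
proof (induction n)
  case 0
  have "((\<lambda>u. - ((1+u) powr (1-s)) / (s-1)) has_real_derivative - ((1-s) * (1+u) powr (1-s-1)) / (s-1)) (at u)"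
    using assms by (intro derivative_eq_intros powr_deriv_aux assms) auto
  moreover have "- ((1-s) * (1+u) powr (1-s-1)) / (s-1) = u^0 * (1+u) powr (-(s+0))"
    using assms by (simp add: field_simps)
  ultimately show ?case by (simp add: fun_eq_iff)
next
  case (Suc n)
  have b: "((\<lambda>u. u^(Suc n) * (1+u) powr (-(s+n))) has_real_derivative (real (Suc n) * u^n * (1+u) powr (-(s+n)) + u^(Suc n) * ((-(s+n)) * (1+u) powr (-(s+n)-1)))) (at u)"
    using DERIV_mult[OF DERIV_pow[of "Suc n" u] powr_deriv_aux[OF assms(2), of "-(s+n)"]] by (simp add: mult_ac)
  have d: "((\<lambda>u. (real (Suc n) * Fa s n u - u^(Suc n) * (1+u) powr (-(s+n))) / (s+n)) has_real_derivative
     (real (Suc n) * (u^n * (1+u) powr (-(s+n))) - (real (Suc n) * u^n * (1+u) powr (-(s+n)) + u^(Suc n) * ((-(s+n)) * (1+u) powr (-(s+n)-1)))) / (s+n)) (at u)"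
    by (intro DERIV_cdivide DERIV_diff DERIV_cmult Suc.IH b)
  have sn: "s + real n > 0" using assms by simp
  have num: "real (Suc n) * (u^n * (1+u) powr (-(s+n))) - (real (Suc n) * u^n * (1+u) powr (-(s+n)) + u^(Suc n) * ((-(s+n)) * (1+u) powr (-(s+n)-1)))
      = (s+n) * (u^(Suc n) * (1+u) powr (-(s+n)-1))"
  proof -
    have gen: "\<And>A B C x::real. A - (A + B * (-x * C)) = x * (B * C)" by (simp add: algebra_simps)
    show ?thesis by (subst mult.assoc[of "real (Suc n)"]) (rule gen)
  qed
  have ex: "-(s+n)-1 = -(s + real (Suc n))" by simp
  have eq: "(real (Suc n) * (u^n * (1+u) powr (-(s+n))) - (real (Suc n) * u^n * (1+u) powr (-(s+n)) + u^(Suc n) * ((-(s+n)) * (1+u) powr (-(s+n)-1)))) / (s+n)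
      = u^(Suc n) * (1+u) powr (-(s + real (Suc n)))"
    unfolding num unfolding ex using sn by simp
  have F: "Fa s (Suc n) = (\<lambda>u. (real (Suc n) * Fa s n u - u^(Suc n) * (1+u) powr (-(s+n))) / (s+n))"
    by (rule ext) (simp only: Fa.simps)
  show ?case unfolding F using d unfolding eq .
qed

lemma Fa_zero:
  assumes "s > 1"
  shows "Fa s n 0 = - fact n / ((s-1) * pochhammer s n)"
proof (induction n)
  case 0 then show ?case by simp
next
  case (Suc n)
  have P: "pochhammer s n > 0" using assms by (intro pochhammer_pos) auto
  have "Fa s (Suc n) 0 = real (Suc n) * Fa s n 0 / (s+n)" by simp
  also have "\<dots> = real (Suc n) * (- fact n / ((s-1) * pochhammer s n)) / (s+n)" by (simp only: Suc.IH)
  also have "\<dots> = - (real (Suc n) * fact n) / ((s-1) * (pochhammer s n * (s+n)))"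
    by (simp add: mult.assoc)
  also have "\<dots> = - fact (Suc n) / ((s-1) * pochhammer s (Suc n))"
    by (simp add: pochhammer_Suc)
  finally show ?case .
qed

lemma Fa_lim:
  assumes "s > 1"
  shows "(Fa s n \<longlongrightarrow> 0) at_top"
proof (induction n)
  case 0
  have "((\<lambda>u. (1+u) powr (1-s)) \<longlongrightarrow> 0) at_top"
    using assms by (intro tendsto_neg_powr filterlim_tendsto_add_at_top[OF tendsto_const filterlim_ident]) auto
  then have "((\<lambda>u. - ((1+u) powr (1-s)) / (s-1)) \<longlongrightarrow> - 0 / (s-1)) at_top"
    using assms by (intro tendsto_intros) auto
  then show ?case using assms by simp
next
  case (Suc n)
  have h: "((\<lambda>u. u^(Suc n) * (1+u) powr (-(s+n))) \<longlongrightarrow> 0) at_top"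
  proof (rule tendsto_sandwich)
    show "\<forall>\<^sub>F u in at_top. 0 \<le> u^(Suc n) * (1+u) powr (-(s+n))"
      by (auto simp: eventually_at_top_linorder intro!: exI[of _ 0])
    show "\<forall>\<^sub>F u in at_top. u^(Suc n) * (1+u) powr (-(s+n)) \<le> (1+u) powr (1-s)"
    proof (rule eventually_at_top_linorder[THEN iffD2], intro exI[of _ 0] allI impI)
      fix u :: real assume u: "u \<ge> 0"
      have "u^(Suc n) \<le> (1+u)^(Suc n)" using u by (intro power_mono) auto
      also have "\<dots> = (1+u) powr (real (Suc n))" using u by (subst powr_realpow) auto
      finally have "u^(Suc n) * (1+u) powr (-(s+n)) \<le> (1+u) powr (real (Suc n)) * (1+u) powr (-(s+n))"
        by (intro mult_right_mono) auto
      also have "\<dots> = (1+u) powr (1-s)" using u by (simp add: powr_add[symmetric])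
      finally show "u^(Suc n) * (1+u) powr (-(s+n)) \<le> (1+u) powr (1-s)" .
    qed
    show "((\<lambda>u. (1+u) powr (1-s)) \<longlongrightarrow> 0) at_top"
      using assms by (intro tendsto_neg_powr filterlim_tendsto_add_at_top[OF tendsto_const filterlim_ident]) auto
  qed auto
  have "((\<lambda>u. (real (Suc n) * Fa s n u - u^(Suc n) * (1+u) powr (-(s+n))) / (s+n)) \<longlongrightarrow> (real (Suc n) * 0 - 0) / (s+n)) at_top"
    using assms by (intro tendsto_intros Suc h) auto
  then show ?case by simp
qed

lemma J_int:
  assumes "s > 1"
  shows "(\<integral>\<^sup>+u. ennreal (u^n * (1+u) powr (-(s+n))) * indicator {0..} u \<partial>lborel)
     = ennreal (fact n / ((s-1) * pochhammer s n))"
proof -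
  have "(\<integral>\<^sup>+u. ennreal (u^n * (1+u) powr (-(s+n))) * indicator {0..} u \<partial>lborel) = ennreal (0 - Fa s n 0)"
    by (rule nn_integral_FTC_atLeast[OF _ Fa_deriv[OF assms] _ Fa_lim[OF assms]]) auto
  then show ?thesis using Fa_zero[OF assms] by simp
qed



lemma pochhammer_nonneg0:
  fixes b :: real
  assumes "0 \<le> b"
  shows "0 \<le> pochhammer b n"
  using assms by (induction n) (auto simp: pochhammer_Suc)

lemma pochhammer_mono_real:
  fixes b s :: real
  assumes "0 \<le> b" "b \<le> s"
  shows "pochhammer b n \<le> pochhammer s n"
proof (induction n)
  case 0 then show ?case by simp
next
  case (Suc n)
  have "(b + n) * pochhammer b n \<le> (s + n) * pochhammer s n"
    using Suc assms by (intro mult_mono pochhammer_nonneg0) auto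
  then show ?case by (simp add: pochhammer_Suc mult_ac)
qed

lemma I_sums:
  fixes s b z u :: real
  assumes "0 \<le> z" "z < 1" "0 \<le> u"
  shows "(\<lambda>n. pochhammer b n / fact n * z^n * (u^n * (1+u) powr (-(s+n))))
           sums ((1+u) powr (-(s-b)) * (1+(1-z)*u) powr (-b))"
proof -
  have zu: "z*u \<le> u" using assms by (intro mult_left_le_one_le) auto
  have zu0: "0 \<le> z*u" using assms by simp
  have lt: "\<bar>-(z*u)\<bar> < 1+u" using zu zu0 by simp
  have "(\<lambda>n. (-b gchoose n) * (1+u) powr (-b - of_nat n) * (-(z*u))^n) sums ((1+u) + -(z*u)) powr (-b)"
    by (rule gen_binomial_real''[OF lt])
  then have S1: "(\<lambda>n. (1+u) powr (-(s-b)) * ((-b gchoose n) * (1+u) powr (-b - of_nat n) * (-(z*u))^n))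
              sums ((1+u) powr (-(s-b)) * ((1+u) + -(z*u)) powr (-b))"
    by (rule sums_mult)
  have E1: "(1+u) + -(z*u) = 1+(1-z)*u" by (simp add: algebra_simps)
  have T: "(1+u) powr (-(s-b)) * ((-b gchoose n) * (1+u) powr (-b - of_nat n) * (-(z*u))^n)
      = pochhammer b n / fact n * z^n * (u^n * (1+u) powr (-(s+n)))" for n
  proof -
    have P: "(1+u) powr (-(s-b)) * (1+u) powr (-b - of_nat n) = (1+u) powr (-(s+n))"
      using assms by (simp add: powr_add[symmetric])
    have Z: "(-(z*u))^n = (-1)^n * z^n * u^n" by (subst power_minus) (simp add: power_mult_distrib mult.assoc)
    have G: "(-b gchoose n) = (-1)^n * pochhammer b n / fact n" by (simp add: gbinomial_pochhammer)
    have m: "((-1::real)^n) * (-1)^n = 1" by (simp add: power_mult_distrib[symmetric])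
    have aux: "\<And>m p f Qa Qb zz uu :: real. m*m = 1 \<Longrightarrow> Qa * (((m * p / f) * Qb) * (m * zz * uu)) = p / f * zz * (uu * (Qa*Qb))"
    proof -
      fix m p f Qa Qb zz uu :: real assume mm: "m*m = 1"
      have "Qa * (((m * p / f) * Qb) * (m * zz * uu)) = (m*m) * (p / f * zz * (uu * (Qa*Qb)))" by (simp add: mult_ac)
      then show "Qa * (((m * p / f) * Qb) * (m * zz * uu)) = p / f * zz * (uu * (Qa*Qb))" using mm by simp
    qed
    show ?thesis unfolding G Z using aux[OF m, where p="pochhammer b n" and f="fact n" and Qa="(1+u) powr (-(s-b))" and Qb="(1+u) powr (-b - of_nat n)" and zz="z^n" and uu="u^n"] unfolding P .
  qed
  show ?thesis using S1 unfolding E1 T .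
qed

lemma hyp_summable:
  fixes s b z :: real
  assumes "s > 1" "0 \<le> b" "b \<le> s" "0 \<le> z" "z < 1"
  shows "summable (\<lambda>n. pochhammer b n * pochhammer 1 n / pochhammer s n * z ^ n / fact n)"
proof -
  show ?thesis
  proof (rule summable_comparison_test'[OF summable_geometric[of z]])
    fix n :: nat
    have ps: "pochhammer s n > 0" using assms by (intro pochhammer_pos) auto
    have "pochhammer b n * pochhammer 1 n / pochhammer s n * z ^ n / fact n = pochhammer b n / pochhammer s n * z ^ n"
      unfolding pochhammer_fact[symmetric] by simp
    also have "\<dots> \<le> 1 * z^n"
      using assms ps pochhammer_mono_real[OF assms(2,3), of n]
      by (intro mult_right_mono) auto
    finally show "norm (pochhammer b n * pochhammer 1 n / pochhammer s n * z ^ n / fact n) \<le> z^n"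
      using assms ps by (simp add: pochhammer_nonneg0)
  qed (use assms in auto)
qed

lemma hyp_nonneg:
  fixes s b z :: real
  assumes "s > 1" "0 \<le> b" "b \<le> s" "0 \<le> z" "z < 1"
  shows "0 \<le> hyp2F1 b 1 s z"
  unfolding hyp2F1_def
  using assms by (intro suminf_nonneg hyp_summable divide_nonneg_nonneg mult_nonneg_nonneg pochhammer_nonneg0) auto

lemma I_int:
  fixes s b z :: real
  assumes "s > 1" "0 \<le> b" "b \<le> s" "0 \<le> z" "z < 1"
  shows "(\<integral>\<^sup>+u. ennreal ((1+u) powr (-(s-b)) * (1+(1-z)*u) powr (-b)) * indicator {0..} u \<partial>lborel)
      = ennreal (hyp2F1 b 1 s z / (s-1))"
proof -
  have sH: "summable (\<lambda>n. pochhammer b n * pochhammer 1 n / pochhammer s n * z ^ n / fact n)"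
    by (rule hyp_summable) (use assms in auto)
  define p where "p n = pochhammer b n / fact n * z^n" for n
  have p0: "0 \<le> p n" for n unfolding p_def using assms by (intro mult_nonneg_nonneg divide_nonneg_pos pochhammer_nonneg0) auto
  have pt: "ennreal ((1+u) powr (-(s-b)) * (1+(1-z)*u) powr (-b)) * indicator {0..} u
     = (\<Sum>n. ennreal (p n) * (ennreal (u^n * (1+u) powr (-(s+n))) * indicator {0..} u))" for u
  proof (cases "u \<ge> 0")
    case True
    have sm: "(\<lambda>n. p n * (u^n * (1+u) powr (-(s+n)))) sums ((1+u) powr (-(s-b)) * (1+(1-z)*u) powr (-b))"
      using I_sums[OF assms(4,5) True, of b s] unfolding p_def .
    have "(\<Sum>n. ennreal (p n) * (ennreal (u^n * (1+u) powr (-(s+n))) * indicator {0..} u))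
        = (\<Sum>n. ennreal (p n * (u^n * (1+u) powr (-(s+n)))))"
      using True p0 by (simp add: ennreal_mult)
    also have "\<dots> = ennreal (\<Sum>n. p n * (u^n * (1+u) powr (-(s+n))))"
      using sm p0 True by (intro suminf_ennreal2) (auto simp: sums_iff)
    also have "\<dots> = ennreal ((1+u) powr (-(s-b)) * (1+(1-z)*u) powr (-b))"
      using sm by (simp add: sums_iff)
    finally show ?thesis using True by simp
  next
    case False then show ?thesis by simp
  qed
  have "(\<integral>\<^sup>+u. ennreal ((1+u) powr (-(s-b)) * (1+(1-z)*u) powr (-b)) * indicator {0..} u \<partial>lborel)
     = (\<integral>\<^sup>+u. (\<Sum>n. ennreal (p n) * (ennreal (u^n * (1+u) powr (-(s+n))) * indicator {0..} u)) \<partial>lborel)"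
    by (intro nn_integral_cong pt)
  also have "\<dots> = (\<Sum>n. \<integral>\<^sup>+u. ennreal (p n) * (ennreal (u^n * (1+u) powr (-(s+n))) * indicator {0..} u) \<partial>lborel)"
    by (intro nn_integral_suminf) auto
  also have "\<dots> = (\<Sum>n. ennreal (p n) * ennreal (fact n / ((s-1) * pochhammer s n)))"
    by (subst nn_integral_cmult) (auto simp del: minus_add_distrib simp: J_int[OF assms(1)])
  also have "\<dots> = (\<Sum>n. ennreal (pochhammer b n * pochhammer 1 n / pochhammer s n * z ^ n / fact n / (s-1)))"
  proof (intro suminf_cong)
    fix n
    have "pochhammer s n > 0" using assms by (intro pochhammer_pos) auto
    then have "p n * (fact n / ((s-1) * pochhammer s n)) = pochhammer b n * pochhammer 1 n / pochhammer s n * z ^ n / fact n / (s-1)"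
      unfolding p_def pochhammer_fact[symmetric] by (simp add: field_simps)
    moreover have "0 \<le> fact n / ((s-1) * pochhammer s n)" using \<open>pochhammer s n > 0\<close> assms by simp
    ultimately show "ennreal (p n) * ennreal (fact n / ((s-1) * pochhammer s n)) = ennreal (pochhammer b n * pochhammer 1 n / pochhammer s n * z ^ n / fact n / (s-1))"
      using p0 by (simp add: ennreal_mult[symmetric])
  qed
  also have "\<dots> = ennreal (\<Sum>n. pochhammer b n * pochhammer 1 n / pochhammer s n * z ^ n / fact n / (s-1))"
  proof (rule suminf_ennreal2)
    fix n
    show "0 \<le> pochhammer b n * pochhammer 1 n / pochhammer s n * z ^ n / fact n / (s-1)"
      using assms by (intro divide_nonneg_nonneg mult_nonneg_nonneg pochhammer_nonneg0) auto
  next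
    show "summable (\<lambda>n. pochhammer b n * pochhammer 1 n / pochhammer s n * z ^ n / fact n / (s-1))"
      using sH by (rule summable_divide)
  qed
  also have "\<dots> = ennreal (hyp2F1 b 1 s z / (s-1))"
    unfolding hyp2F1_def by (subst suminf_divide[OF sH]) simp
  finally show ?thesis .
qed



lemma layer_cake:
  fixes f :: "'a \<Rightarrow> real"
  assumes M: "sigma_finite_measure M" and f: "f \<in> borel_measurable M"
  shows "(\<integral>\<^sup>+\<omega>. ennreal (f \<omega>) \<partial>M) = (\<integral>\<^sup>+x. emeasure M {\<omega>\<in>space M. x < f \<omega>} * indicator {0..} x \<partial>lborel)"
proof -
  interpret pair_sigma_finite M lborel
    unfolding pair_sigma_finite_def using M lborel.sigma_finite_measure_axioms by simp
  define G where "G \<omega> x = (if 0 \<le> x \<and> x < f \<omega> then 1 else 0 :: ennreal)" for \<omega> x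
  have Gm: "case_prod G \<in> borel_measurable (M \<Otimes>\<^sub>M lborel)"
    unfolding G_def case_prod_beta using f by measurable
  have inner1: "ennreal (f \<omega>) = (\<integral>\<^sup>+x. G \<omega> x \<partial>lborel)" for \<omega>
  proof -
    have "(\<lambda>x. G \<omega> x) = indicator {0..<f \<omega>}" by (auto simp: G_def fun_eq_iff indicator_def)
    then show ?thesis by (cases "0 \<le> f \<omega>") (auto simp: ennreal_neg)
  qed
  have inner2: "(\<integral>\<^sup>+\<omega>. G \<omega> x \<partial>M) = emeasure M {\<omega>\<in>space M. x < f \<omega>} * indicator {0..} x" for x
  proof -
    have "(\<integral>\<^sup>+\<omega>. G \<omega> x \<partial>M) = (\<integral>\<^sup>+\<omega>. indicator {\<omega>\<in>space M. x < f \<omega>} \<omega> * indicator {0..} x \<partial>M)"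
      by (intro nn_integral_cong) (auto simp: G_def indicator_def)
    also have "\<dots> = emeasure M {\<omega>\<in>space M. x < f \<omega>} * indicator {0..} x"
      using f by (subst nn_integral_multc) auto
    finally show ?thesis .
  qed
  have "(\<integral>\<^sup>+\<omega>. ennreal (f \<omega>) \<partial>M) = (\<integral>\<^sup>+\<omega>. (\<integral>\<^sup>+x. G \<omega> x \<partial>lborel) \<partial>M)"
    by (simp add: inner1)
  also have "\<dots> = (\<integral>\<^sup>+x. (\<integral>\<^sup>+\<omega>. G \<omega> x \<partial>M) \<partial>lborel)"
    by (rule Fubini'[OF Gm, symmetric])
  also have "\<dots> = (\<integral>\<^sup>+x. emeasure M {\<omega>\<in>space M. x < f \<omega>} * indicator {0..} x \<partial>lborel)"
    by (simp add: inner2)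
  finally show ?thesis .
qed



lemma alg_factor:
  fixes ck cl g a t sk sl :: real
  assumes "ck \<in> {0,1}" "cl \<in> {0,1}" "sk > 0" "sl > 0" "a \<ge> 0" "t \<ge> 0"
  shows "(1 + ck * a / sk + cl * t / sl) powr (-g) =
     (1 + t/sl) powr (-(cl*g)) * ((1 + a/sk) powr (-(ck*g - ck*cl*g)) * (1 + (1 - t/(sl+t)) * (a/sk)) powr (-(ck*cl*g)))"
proof -
  have p1: "1 + t/sl > 0" "1 + a/sk > 0" using assms by (auto simp: add_pos_nonneg)
  have e: "1 - t/(sl+t) = sl/(sl+t)" using assms by (simp add: field_simps)
  then have p2: "1 + (1 - t/(sl+t)) * (a/sk) > 0" using assms by (auto intro!: add_pos_nonneg)
  have key: "1 + a/sk + t/sl = (1 + t/sl) * (1 + (1 - t/(sl+t)) * (a/sk))"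
  proof -
    have "sl + t > 0" using assms by simp
    have h0: "1 + t/sl = (sl+t)/sl" using assms by (simp add: field_simps)
    have h: "(1 + t/sl) * (sl/(sl+t)) = 1" unfolding h0 using assms \<open>sl + t > 0\<close> by simp
    have "(1 + t/sl) * (1 + (sl/(sl+t)) * (a/sk)) = (1 + t/sl) + ((1 + t/sl) * (sl/(sl+t))) * (a/sk)"
      by (simp only: ring_distribs mult_1_right mult.assoc)
    then show ?thesis unfolding e h by simp
  qed
  show ?thesis
    using assms(1,2)
  proof (elim insertE emptyE)
    assume "ck = 1" "cl = 1"
    then show ?thesis using p1 p2 key by (simp add: powr_mult)
  qed (use p1 p2 in auto)
qed

lemma alg:
  fixes ck cl g :: "nat \<Rightarrow> real" and a t sk sl :: real and J :: "nat set"
  assumes "\<And>j. j \<in> J \<Longrightarrow> ck j \<in> {0,1}" "\<And>j. j \<in> J \<Longrightarrow> cl j \<in> {0,1}" "sk > 0" "sl > 0" "a \<ge> 0" "t \<ge> 0"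
  shows "(\<Prod>j\<in>J. (1 + ck j * a / sk + cl j * t / sl) powr (-g j)) =
     (1 + t/sl) powr (-(\<Sum>j\<in>J. cl j * g j)) * ((1 + a/sk) powr (-((\<Sum>j\<in>J. ck j*g j) - (\<Sum>j\<in>J. ck j*cl j*g j)))
       * (1 + (1 - t/(sl+t)) * (a/sk)) powr (-(\<Sum>j\<in>J. ck j*cl j*g j)))"
proof -
  have p1: "1 + t/sl > 0" "1 + a/sk > 0" using assms by (auto simp: add_pos_nonneg)
  have "1 - t/(sl+t) = sl/(sl+t)" using assms by (simp add: field_simps)
  then have p2: "1 + (1 - t/(sl+t)) * (a/sk) > 0" using assms by (auto intro!: add_pos_nonneg)
  have "(\<Prod>j\<in>J. (1 + ck j * a / sk + cl j * t / sl) powr (-g j)) =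
     (\<Prod>j\<in>J. (1 + t/sl) powr (-(cl j*g j)) * ((1 + a/sk) powr (-(ck j*g j - ck j*cl j*g j)) * (1 + (1 - t/(sl+t)) * (a/sk)) powr (-(ck j*cl j*g j))))"
    using assms by (intro prod.cong refl alg_factor) auto
  also have "\<dots> = (\<Prod>j\<in>J. (1 + t/sl) powr (-(cl j*g j))) * ((\<Prod>j\<in>J. (1 + a/sk) powr (-(ck j*g j - ck j*cl j*g j))) * (\<Prod>j\<in>J. (1 + (1 - t/(sl+t)) * (a/sk)) powr (-(ck j*cl j*g j))))"
    by (simp add: prod.distrib)
  also have "\<dots> = (1 + t/sl) powr (\<Sum>j\<in>J. -(cl j*g j)) * ((1 + a/sk) powr (\<Sum>j\<in>J. -(ck j*g j - ck j*cl j*g j)) * (1 + (1 - t/(sl+t)) * (a/sk)) powr (\<Sum>j\<in>J. -(ck j*cl j*g j)))"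
    using p1 p2 by (simp add: powr_sum)
  finally show ?thesis by (simp add: sum_negf sum_subtractf)
qed



theorem proposition4p5:
  fixes M :: "'a measure" and n :: nat and c :: "nat \<Rightarrow> nat \<Rightarrow> real"
    and \<sigma> :: "nat \<Rightarrow> real" and \<gamma> :: "nat \<Rightarrow> real" and X :: "nat \<Rightarrow> 'a \<Rightarrow> real"
    and k l :: nat and q :: real
  assumes "prob_space M"
    and "n \<ge> 2"
    and "\<And>i j. i \<in> {1..n} \<Longrightarrow> j \<in> {1..n+1} \<Longrightarrow> c i j \<in> {0, 1}"
    and "\<And>i. i \<in> {1..n} \<Longrightarrow> \<sigma> i > 0"
    and "\<And>j. j \<in> {1..n+1} \<Longrightarrow> \<gamma> j > 0"
    and "\<And>i. i \<in> {1..n} \<Longrightarrow> X i \<in> borel_measurable M"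
    and "\<And>x :: nat \<Rightarrow> real. (\<forall>i\<in>{1..n}. x i > 0) \<Longrightarrow>
           measure M {\<omega>\<in>space M. \<forall>i\<in>{1..n}. X i \<omega> > x i}
             = (\<Prod>j=1..n+1. (1 + (\<Sum>i=1..n. c i j * x i / \<sigma> i)) powr (- \<gamma> j))"
    and "k \<in> {1..n}" and "l \<in> {1..n}" and "k \<noteq> l"
    and "(\<Sum>j=1..n+1. c k j * \<gamma> j) > 1"
    and "0 \<le> q" and "q < 1"
  shows "cond_exp_event M (X k) {\<omega>\<in>space M. X l \<omega> > VaR M q (X l)}
           = \<sigma> k / ((\<Sum>j=1..n+1. c k j * \<gamma> j) - 1)
             * hyp2F1 (\<Sum>j=1..n+1. c k j * c l j * \<gamma> j) 1 (\<Sum>j=1..n+1. c k j * \<gamma> j)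
                 (VaR M q (X l) / (\<sigma> l + VaR M q (X l)))"
proof -
  interpret P: prob_space M by fact
  note c01 = assms(3) and \<sigma>pos = assms(4) and \<gamma>pos = assms(5) and Xm = assms(6) and surv = assms(7)
  define S where "S y = (\<Prod>j=1..n+1. (1 + (\<Sum>i=1..n. c i j * y i / \<sigma> i)) powr (- \<gamma> j))" for y :: "nat \<Rightarrow> real"
  define E where "E y = {\<omega>\<in>space M. \<forall>i\<in>{1..n}. X i \<omega> > y i}" for y :: "nat \<Rightarrow> real"
  have Xk: "X k \<in> borel_measurable M" and Xl: "X l \<in> borel_measurable M" using Xm assms(8,9) by auto
  have Emeas: "E y \<in> sets M" for y
    unfolding E_def
  proof (intro sets.sets_Collect_finite_All)
    fix i assume "i \<in> {1..n}"
    then have "X i \<in> borel_measurable M" by (rule Xm)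
    then show "{\<omega>\<in>space M. y i < X i \<omega>} \<in> sets M" by measurable
  qed auto
  have surv0: "measure M (E y) = S y" if y0: "\<And>i. i \<in> {1..n} \<Longrightarrow> 0 \<le> y i" for y
  proof -
    define A where "A m = E (\<lambda>i. y i + inverse (real (Suc m)))" for m
    have "incseq A"
    proof (rule incseq_SucI)
      fix m
      have iv: "inverse (real (Suc (Suc m))) \<le> inverse (real (Suc m))" by (simp add: field_simps)
      show "A m \<subseteq> A (Suc m)" unfolding A_def E_def
      proof (intro subsetI, elim CollectE conjE, intro CollectI conjI ballI)
        fix \<omega> i assume a: "\<forall>i\<in>{1..n}. y i + inverse (real (Suc m)) < X i \<omega>" "i \<in> {1..n}"
        have "y i + inverse (real (Suc m)) < X i \<omega>" using a by blast
        then show "y i + inverse (real (Suc (Suc m))) < X i \<omega>" using iv by linarith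
      qed
    qed
    have U: "(\<Union>m. A m) = E y"
    proof
      show "(\<Union>m. A m) \<subseteq> E y"
        unfolding A_def E_def
      proof (intro subsetI)
        fix \<omega> assume "\<omega> \<in> (\<Union>m. {\<omega> \<in> space M. \<forall>i\<in>{1..n}. y i + inverse (real (Suc m)) < X i \<omega>})"
        then obtain m where a: "\<omega> \<in> space M" "\<forall>i\<in>{1..n}. y i + inverse (real (Suc m)) < X i \<omega>" by auto
        show "\<omega> \<in> {\<omega> \<in> space M. \<forall>i\<in>{1..n}. y i < X i \<omega>}"
        proof (intro CollectI conjI ballI a(1))
          fix i assume "i \<in> {1..n}"
          then have "y i + inverse (real (Suc m)) < X i \<omega>" using a by blast
          moreover have "inverse (real (Suc m)) > 0" by simp
          ultimately show "y i < X i \<omega>" by linarith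
        qed
      qed
    next
      show "E y \<subseteq> (\<Union>m. A m)"
      proof
        fix \<omega> assume \<omega>: "\<omega> \<in> E y"
        have "\<forall>\<^sub>F m in sequentially. \<forall>i\<in>{1..n}. y i + inverse (real (Suc m)) < X i \<omega>"
        proof (rule eventually_ball_finite)
          show "\<forall>i\<in>{1..n}. \<forall>\<^sub>F m in sequentially. y i + inverse (real (Suc m)) < X i \<omega>"
          proof
            fix i assume i: "i \<in> {1..n}"
            have "X i \<omega> - y i > 0" using \<omega> i unfolding E_def by auto
            from order_tendstoD(2)[OF LIMSEQ_inverse_real_of_nat this]
            show "\<forall>\<^sub>F m in sequentially. y i + inverse (real (Suc m)) < X i \<omega>"
              by eventually_elim simp
          qed
        qed simp
        then obtain m where "\<forall>i\<in>{1..n}. y i + inverse (real (Suc m)) < X i \<omega>"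
          by (auto simp: eventually_sequentially)
        then show "\<omega> \<in> (\<Union>m. A m)" using \<omega> unfolding A_def E_def by auto
      qed
    qed
    have lim1: "(\<lambda>m. measure M (A m)) \<longlonglongrightarrow> measure M (E y)"
      using P.finite_Lim_measure_incseq[of A] \<open>incseq A\<close> Emeas unfolding U by (auto simp: A_def)
    have eqA: "measure M (A m) = S (\<lambda>i. y i + inverse (real (Suc m)))" for m
      unfolding A_def E_def S_def
    proof (rule surv, intro ballI)
      fix i assume "i \<in> {1..n}"
      then have "0 \<le> y i" by (rule y0)
      moreover have "inverse (real (Suc m)) > 0" by simp
      ultimately show "0 < y i + inverse (real (Suc m))" by linarith
    qed
    have lim2: "(\<lambda>m. S (\<lambda>i. y i + inverse (real (Suc m)))) \<longlonglongrightarrow> S y"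
      unfolding S_def
    proof (intro tendsto_prod tendsto_powr tendsto_const)
      fix j assume j: "j \<in> {1..n+1}"
      have inner: "((\<lambda>m. y i + inverse (real (Suc m))) \<longlongrightarrow> y i) sequentially" for i
        using tendsto_add[OF tendsto_const LIMSEQ_inverse_real_of_nat, of "y i"] by simp
      show "((\<lambda>m. 1 + (\<Sum>i=1..n. c i j * (y i + inverse (real (Suc m))) / \<sigma> i)) \<longlongrightarrow> 1 + (\<Sum>i=1..n. c i j * y i / \<sigma> i)) sequentially"
      proof (intro tendsto_add tendsto_const tendsto_sum)
        fix i assume i: "i \<in> {1..n}"
        show "((\<lambda>m. c i j * (y i + inverse (real (Suc m))) / \<sigma> i) \<longlongrightarrow> c i j * y i / \<sigma> i) sequentially"
          using \<sigma>pos[OF i] by (intro tendsto_divide tendsto_mult tendsto_const inner) auto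
      qed
      have "0 \<le> (\<Sum>i=1..n. c i j * y i / \<sigma> i)"
      proof (intro sum_nonneg)
        fix i assume i: "i \<in> {1..n}"
        have "c i j \<ge> 0" using c01[OF i j] by auto
        then show "0 \<le> c i j * y i / \<sigma> i" using y0[OF i] \<sigma>pos[OF i] by simp
      qed
      then show "1 + (\<Sum>i=1..n. c i j * y i / \<sigma> i) \<noteq> 0" by linarith
    qed
    show ?thesis using lim1 lim2 unfolding eqA by (rule LIMSEQ_unique)
  qed

  have S0: "S (\<lambda>_. 0) = 1" unfolding S_def by simp
  have E0: "measure M (E (\<lambda>_. 0)) = 1" using surv0[of "\<lambda>_. 0"] S0 by simp
  have AE0: "AE \<omega> in M. \<omega> \<in> E (\<lambda>_. 0)" by (rule P.AE_prob_1) (use E0 in simp)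
  have AEpos: "AE \<omega> in M. \<forall>i\<in>{1..n}. 0 < X i \<omega>" using AE0 unfolding E_def by auto
  define yk where "yk a t = (\<lambda>i. if i = k then a else if i = l then t else 0)" for a t :: real
  have biv: "measure M {\<omega>\<in>space M. a < X k \<omega> \<and> t < X l \<omega>} = S (yk a t)" if a0: "0 \<le> a" and t0: "0 \<le> t" for a t
  proof -
    have "measure M {\<omega>\<in>space M. a < X k \<omega> \<and> t < X l \<omega>} = measure M (E (yk a t))"
    proof (rule measure_eq_AE)
      show "AE \<omega> in M. (\<omega> \<in> {\<omega>\<in>space M. a < X k \<omega> \<and> t < X l \<omega>}) = (\<omega> \<in> E (yk a t))"
        using AEpos
      proof eventually_elim
        case (elim \<omega>)
        show ?case unfolding E_def yk_def using elim assms(8,9,10) by auto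
      qed
      show "{\<omega>\<in>space M. a < X k \<omega> \<and> t < X l \<omega>} \<in> sets M" using Xk Xl by measurable
      show "E (yk a t) \<in> sets M" by (rule Emeas)
    qed
    also have "\<dots> = S (yk a t)" using a0 t0 by (intro surv0) (auto simp: yk_def)
    finally show ?thesis .
  qed
  define s where "s = (\<Sum>j=1..n+1. c k j * \<gamma> j)"
  define bb where "bb = (\<Sum>j=1..n+1. c k j * c l j * \<gamma> j)"
  define gl where "gl = (\<Sum>j=1..n+1. c l j * \<gamma> j)"
  have Sform: "S (yk a t) = (1 + t/\<sigma> l) powr (-gl) * ((1 + a/\<sigma> k) powr (-(s - bb)) * (1 + (1 - t/(\<sigma> l+t)) * (a/\<sigma> k)) powr (-bb))"
    if a0: "0 \<le> a" and t0: "0 \<le> t" for a t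
  proof -
    have inner: "(\<Sum>i=1..n. c i j * yk a t i / \<sigma> i) = c k j * a / \<sigma> k + c l j * t / \<sigma> l" for j
    proof -
      have "(\<Sum>i=1..n. c i j * yk a t i / \<sigma> i) = (\<Sum>i=1..n. (if i = k then c k j * a / \<sigma> k else 0) + (if i = l then c l j * t / \<sigma> l else 0))"
        using assms(10) by (intro sum.cong) (auto simp: yk_def)
      also have "\<dots> = c k j * a / \<sigma> k + c l j * t / \<sigma> l"
        using assms(8,9) by (simp add: sum.distrib)
      finally show ?thesis .
    qed
    show ?thesis unfolding S_def inner s_def bb_def gl_def add.assoc[symmetric]
      using assms(8,9) by (intro alg c01 \<sigma>pos a0 t0) auto
  qed
  define t where "t = VaR M q (X l)"
  have compl0: "measure M (space M - E (\<lambda>_. 0)) = 0" using P.prob_compl[OF Emeas] E0 by simp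
  have Fneg: "measure M {\<omega>\<in>space M. X l \<omega> \<le> x} = 0" if x: "x < 0" for x
  proof -
    have "{\<omega>\<in>space M. X l \<omega> \<le> x} \<subseteq> space M - E (\<lambda>_. 0)"
    proof (intro subsetI DiffI)
      fix \<omega> assume w: "\<omega> \<in> {\<omega>\<in>space M. X l \<omega> \<le> x}"
      then show "\<omega> \<in> space M" by blast
      show "\<omega> \<notin> E (\<lambda>_. 0)"
      proof
        assume "\<omega> \<in> E (\<lambda>_. 0)"
        then have "0 < X l \<omega>" using assms(9) unfolding E_def by blast
        moreover have "X l \<omega> \<le> x" using w by blast
        ultimately show False using x by linarith
      qed
    qed
    then have "measure M {\<omega>\<in>space M. X l \<omega> \<le> x} \<le> measure M (space M - E (\<lambda>_. 0))"
      by (intro P.finite_measure_mono) (use Emeas in auto)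
    then show ?thesis using compl0 by (simp add: measure_nonneg antisym)
  qed
  have "\<exists>m::nat. measure M {\<omega>\<in>space M. X l \<omega> \<le> real m} > q"
  proof -
    define B where "B m = {\<omega>\<in>space M. real m < X l \<omega>}" for m :: nat
    have Bm: "B m \<in> sets M" for m unfolding B_def using Xl by measurable
    have "decseq B" unfolding decseq_def B_def by auto
    have "(\<Inter>m. B m) = {}"
    proof (rule ccontr)
      assume "(\<Inter>m. B m) \<noteq> {}"
      then obtain \<omega> where "\<And>m. \<omega> \<in> B m" by auto
      moreover obtain m :: nat where "X l \<omega> < real m" using reals_Archimedean2 by blast
      moreover have "real m < X l \<omega>" using calculation(1)[of m] unfolding B_def by blast
      ultimately show False by linarith
    qed
    then have "(\<lambda>m. measure M (B m)) \<longlonglongrightarrow> 0"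
      using P.finite_Lim_measure_decseq[of B] Bm \<open>decseq B\<close> by auto
    from order_tendstoD(2)[OF this, of "1 - q"] assms(13)
    obtain m where m: "measure M (B m) < 1 - q" by (auto simp: eventually_sequentially)
    have "space M - B m = {\<omega>\<in>space M. X l \<omega> \<le> real m}" unfolding B_def by auto
    then have "measure M {\<omega>\<in>space M. X l \<omega> \<le> real m} = 1 - measure M (B m)"
      using P.prob_compl[OF Bm, of m] by simp
    then show ?thesis using m by (intro exI[of _ m]) linarith
  qed
  then obtain m :: nat where m: "measure M {\<omega>\<in>space M. X l \<omega> \<le> real m} > q" by blast
  have t0: "0 \<le> t"
  proof (cases "q = 0")
    case True
    have "0 \<le> Inf {x. measure M {\<omega>\<in>space M. X l \<omega> \<le> x} > 0}"
    proof (rule cInf_greatest)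
      show "{x. measure M {\<omega>\<in>space M. X l \<omega> \<le> x} > 0} \<noteq> {}" using m True by auto
      fix x assume "x \<in> {x. measure M {\<omega>\<in>space M. X l \<omega> \<le> x} > 0}"
      then have "0 < measure M {\<omega>\<in>space M. X l \<omega> \<le> x}" by simp
      then show "0 \<le> x" using Fneg[of x] by (cases "x < 0") auto
    qed
    then show ?thesis unfolding t_def VaR_def using True by simp
  next
    case False
    have "0 \<le> Inf {x. measure M {\<omega>\<in>space M. X l \<omega> \<le> x} \<ge> q}"
    proof (rule cInf_greatest)
      show "{x. measure M {\<omega>\<in>space M. X l \<omega> \<le> x} \<ge> q} \<noteq> {}"
        using m by (intro ex_in_conv[THEN iffD1] exI[of _ "real m"]) simp
      fix x assume "x \<in> {x. measure M {\<omega>\<in>space M. X l \<omega> \<le> x} \<ge> q}"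
      then have "q \<le> measure M {\<omega>\<in>space M. X l \<omega> \<le> x}" by simp
      then show "0 \<le> x" using Fneg[of x] False assms(12) by (cases "x < 0") auto
    qed
    then show ?thesis unfolding t_def VaR_def using False by simp
  qed

  have \<sigma>k: "\<sigma> k > 0" using \<sigma>pos assms(8) by blast
  have \<sigma>l: "\<sigma> l > 0" using \<sigma>pos assms(9) by blast
  define z where "z = t / (\<sigma> l + t)"
  define A where "A = {\<omega>\<in>space M. t < X l \<omega>}"
  define PA where "PA = (1 + t/\<sigma> l) powr (-gl)"
  have tl: "1 + t/\<sigma> l > 0" using t0 \<sigma>l by (simp add: add_pos_nonneg)
  have PApos: "PA > 0" unfolding PA_def using tl by simp
  have Am: "A \<in> sets M" unfolding A_def using Xl by measurable
  have measA: "measure M A = PA"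
  proof -
    have "measure M A = measure M {\<omega>\<in>space M. 0 < X k \<omega> \<and> t < X l \<omega>}"
    proof (rule measure_eq_AE)
      show "AE \<omega> in M. (\<omega> \<in> A) = (\<omega> \<in> {\<omega>\<in>space M. 0 < X k \<omega> \<and> t < X l \<omega>})"
        using AEpos
      proof eventually_elim
        case (elim \<omega>)
        then have "0 < X k \<omega>" using assms(8) by blast
        then show ?case unfolding A_def by auto
      qed
      show "{\<omega>\<in>space M. 0 < X k \<omega> \<and> t < X l \<omega>} \<in> sets M" using Xk Xl by measurable
    qed (rule Am)
    also have "\<dots> = S (yk 0 t)" by (rule biv) (use t0 in auto)
    also have "\<dots> = PA" unfolding Sform[OF order_refl t0] PA_def by simp
    finally show ?thesis .
  qed
  have s1: "s > 1" using assms(11) unfolding s_def .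
  have bb0: "0 \<le> bb" unfolding bb_def
  proof (intro sum_nonneg)
    fix j assume j: "j \<in> {1..n+1}"
    show "0 \<le> c k j * c l j * \<gamma> j" using c01[OF assms(8) j] c01[OF assms(9) j] \<gamma>pos[OF j] by auto
  qed
  have bbs: "bb \<le> s" unfolding bb_def s_def
  proof (intro sum_mono)
    fix j assume j: "j \<in> {1..n+1}"
    show "c k j * c l j * \<gamma> j \<le> c k j * \<gamma> j" using c01[OF assms(8) j] c01[OF assms(9) j] \<gamma>pos[OF j] by auto
  qed
  have z0: "0 \<le> z" unfolding z_def using t0 \<sigma>l by simp
  have z1: "z < 1" unfolding z_def using t0 \<sigma>l by simp
  define H where "H = hyp2F1 bb 1 s z"
  have H0: "0 \<le> H" unfolding H_def by (rule hyp_nonneg[OF s1 bb0 bbs z0 z1])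
  define F where "F u = (1+u) powr (-(s-bb)) * (1+(1-z)*u) powr (-bb)" for u
  have Fint: "(\<integral>\<^sup>+u. ennreal (F u) * indicator {0..} u \<partial>lborel) = ennreal (H / (s-1))"
    unfolding F_def H_def by (rule I_int[OF s1 bb0 bbs z0 z1])
  have Fm[measurable]: "F \<in> borel_measurable borel" unfolding F_def by measurable
  have F0: "0 \<le> F u" for u unfolding F_def by simp
  have fmeas: "(\<lambda>\<omega>. indicator A \<omega> * X k \<omega>) \<in> borel_measurable M" using Am Xk by measurable
  have pt: "emeasure M {\<omega>\<in>space M. x < indicator A \<omega> * X k \<omega>} * indicator {0..} x
      = ennreal PA * (ennreal (F (x / \<sigma> k)) * indicator {0..} x)" for x
  proof (cases "0 \<le> x")
    case True
    have "{\<omega>\<in>space M. x < indicator A \<omega> * X k \<omega>} = {\<omega>\<in>space M. x < X k \<omega> \<and> t < X l \<omega>}"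
      using True unfolding A_def by (auto simp: indicator_def)
    then have "emeasure M {\<omega>\<in>space M. x < indicator A \<omega> * X k \<omega>} = ennreal (S (yk x t))"
      using biv[OF True t0] by (simp add: P.emeasure_eq_measure)
    also have "S (yk x t) = PA * F (x / \<sigma> k)"
      unfolding Sform[OF True t0] PA_def F_def z_def by simp
    finally show ?thesis using True PApos F0 by (simp add: ennreal_mult)
  next
    case False
    then show ?thesis by simp
  qed
  have "(\<integral>\<^sup>+\<omega>. ennreal (indicator A \<omega> * X k \<omega>) \<partial>M)
      = (\<integral>\<^sup>+x. ennreal PA * (ennreal (F (x / \<sigma> k)) * indicator {0..} x) \<partial>lborel)"
    unfolding layer_cake[OF P.sigma_finite_measure_axioms fmeas] pt ..
  also have "\<dots> = ennreal PA * (\<integral>\<^sup>+x. ennreal (F (x / \<sigma> k)) * indicator {0..} x \<partial>lborel)"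
    by (intro nn_integral_cmult) measurable
  also have "(\<integral>\<^sup>+x. ennreal (F (x / \<sigma> k)) * indicator {0..} x \<partial>lborel)
      = ennreal (\<sigma> k) * (\<integral>\<^sup>+u. ennreal (F u) * indicator {0..} u \<partial>lborel)"
  proof -
    have "(\<integral>\<^sup>+x. ennreal (F (x / \<sigma> k)) * indicator {0..} x \<partial>lborel)
       = \<bar>\<sigma> k\<bar> * (\<integral>\<^sup>+u. ennreal (F ((0 + \<sigma> k * u) / \<sigma> k)) * indicator {0..} (0 + \<sigma> k * u) \<partial>lborel)"
    proof (rule nn_integral_real_affine)
      show "(\<lambda>x. ennreal (F (x / \<sigma> k)) * indicator {0..} x) \<in> borel_measurable borel" by measurable
    qed (use \<sigma>k in simp)
    also have "(\<lambda>u. ennreal (F ((0 + \<sigma> k * u) / \<sigma> k)) * indicator {0..} (0 + \<sigma> k * u)) = (\<lambda>u. ennreal (F u) * indicator {0..} u)"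
      using \<sigma>k by (auto simp: fun_eq_iff indicator_def zero_le_mult_iff)
    finally show ?thesis using \<sigma>k by simp
  qed
  also have "ennreal PA * (ennreal (\<sigma> k) * (\<integral>\<^sup>+u. ennreal (F u) * indicator {0..} u \<partial>lborel)) = ennreal PA * (ennreal (\<sigma> k) * ennreal (H / (s-1)))"
    unfolding Fint ..
  also have "ennreal PA * (ennreal (\<sigma> k) * ennreal (H / (s-1))) = ennreal (PA * \<sigma> k * (H / (s-1)))"
  proof -
    have h: "0 \<le> H/(s-1)" using H0 s1 by simp
    have h2: "0 \<le> \<sigma> k * (H/(s-1))" using h \<sigma>k by (intro mult_nonneg_nonneg) auto
    have "ennreal PA * (ennreal (\<sigma> k) * ennreal (H / (s-1))) = ennreal PA * ennreal (\<sigma> k * (H / (s-1)))"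
      using ennreal_mult[of "\<sigma> k" "H/(s-1)"] h \<sigma>k by simp
    also have "\<dots> = ennreal (PA * (\<sigma> k * (H / (s-1))))"
      using ennreal_mult[of PA "\<sigma> k * (H/(s-1))"] h2 PApos by simp
    finally show ?thesis by (simp only: mult.assoc)
  qed
  finally have nn: "(\<integral>\<^sup>+\<omega>. ennreal (indicator A \<omega> * X k \<omega>) \<partial>M) = ennreal (PA * \<sigma> k * (H / (s-1)))" .
  have AEnn: "AE \<omega> in M. 0 \<le> indicator A \<omega> * X k \<omega>"
    using AEpos
  proof eventually_elim
    case (elim \<omega>)
    then have "0 < X k \<omega>" using assms(8) by blast
    then show ?case by (simp add: indicator_def)
  qed
  have "(\<integral>\<omega>. indicator A \<omega> * X k \<omega> \<partial>M) = PA * \<sigma> k * (H / (s-1))"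
    using integral_eq_nn_integral[OF fmeas AEnn] nn PApos \<sigma>k H0 s1 by simp
  then have "cond_exp_event M (X k) A = \<sigma> k / (s - 1) * H"
    unfolding cond_exp_event_def measA using PApos by simp
  then show ?thesis unfolding A_def H_def z_def t_def s_def bb_def .
qed

end
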